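(* For a ring $R$, the following are equivalent: (1) $R$ is uniquely clean; (2) $R$ is a DI ring in which every idempotent is central.
   Context: All rings are associative with identity; $U(R)$ is the group of units. $\Delta(R)=\{x\in R: x+u\in U(R)\text{ for all }u\in U(R)\}$. A ring $R$ is a DI ring if every $r\in R$ can be written $r=e+b$ with $e^2=e\in R$ and $b\in\Delta(R)$. A ring $R$ is uniquely clean if every element of $R$ can be written in exactly one way as $e+u$ with $e^2=e$ and $u\in U(R)$. *)

theory Defs
  imports Main
begin

definition units :: "'a::ring_1 set" where
  "units = {u. \<exists>v. u * v = 1 \<and> v * u = 1}"

definition idempotent :: "'a::ring_1 \<Rightarrow> bool" where
  "idempotent e \<longleftrightarrow> e * e = e"

definition Delta :: "'a::ring_1 set" where
  "Delta = {x. \<forall>u\<in>units. x + u \<in> units}"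

definition DI_ring :: "'a::ring_1 itself \<Rightarrow> bool" where
  "DI_ring TYPE('a) \<longleftrightarrow> (\<forall>r::'a. \<exists>e b. idempotent e \<and> b \<in> Delta \<and> r = e + b)"

definition uniquely_clean :: "'a::ring_1 itself \<Rightarrow> bool" where
  "uniquely_clean TYPE('a) \<longleftrightarrow> (\<forall>r::'a. \<exists>!p. idempotent (fst p) \<and> snd p \<in> units \<and> r = fst p + snd p)"

definition idempotents_central :: "'a::ring_1 itself \<Rightarrow> bool" where
  "idempotents_central TYPE('a) \<longleftrightarrow> (\<forall>e::'a. idempotent e \<longrightarrow> (\<forall>x. e * x = x * e))"

end

theory Submission
  imports Defs
begin

lemma unitsI: "u * v = 1 \<Longrightarrow> v * u = 1 \<Longrightarrow> (u::'a::ring_1) \<in> units"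
  unfolding units_def by blast

lemma unitsE: assumes "(u::'a::ring_1) \<in> units" obtains v where "u * v = 1" "v * u = 1"
  using assms unfolding units_def by blast

lemma units_one: "(1::'a::ring_1) \<in> units" by (rule unitsI[of _ 1]) simp_all

lemma units_mult: assumes "(a::'a::ring_1) \<in> units" "b \<in> units" shows "a * b \<in> units"
proof -
  obtain a' where a: "a * a' = 1" "a' * a = 1" using assms(1) by (rule unitsE)
  obtain b' where b: "b * b' = 1" "b' * b = 1" using assms(2) by (rule unitsE)
  have "(a*b)*(b'*a') = 1" by (metis a(1) b(1) mult.assoc mult_1_left)
  moreover have "(b'*a')*(a*b) = 1" by (metis a(2) b(2) mult.assoc mult_1_left)
  ultimately show ?thesis by (rule unitsI)
qed

lemma units_uminus: assumes "(a::'a::ring_1) \<in> units" shows "- a \<in> units"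
proof -
  obtain a' where a: "a * a' = 1" "a' * a = 1" using assms by (rule unitsE)
  show ?thesis by (rule unitsI[of _ "- a'"]) (simp_all add: a)
qed

lemma units_uminus_iff: "(- (a::'a::ring_1)) \<in> units \<longleftrightarrow> a \<in> units"
  using units_uminus by fastforce

lemma idem_unit: assumes "idempotent (e::'a::ring_1)" "e \<in> units" shows "e = 1"
proof -
  obtain v where v: "e * v = 1" using assms(2) by (rule unitsE)
  have "e = e * (e * v)" using v by simp
  also have "\<dots> = e * v" using assms(1) unfolding idempotent_def by (simp add: mult.assoc[symmetric])
  finally show ?thesis using v by simp
qed

lemma combo:
  assumes c: "\<And>x. e * x = x * (e::'a::ring_1)" and ie: "e * e = e"
    and "a \<in> units" "b \<in> units"
  shows "e * a + (1 - e) * b \<in> units"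
proof -
  obtain a' where a: "a * a' = 1" "a' * a = 1" using assms(3) by (rule unitsE)
  obtain b' where b: "b * b' = 1" "b' * b = 1" using assms(4) by (rule unitsE)
  define g where "g = 1 - e"
  have cg: "g * x = x * g" for x by (simp add: g_def algebra_simps c)
  have ig: "g * g = g" by (simp add: g_def algebra_simps ie)
  have eg: "e * g = 0" "g * e = 0" by (simp_all add: g_def algebra_simps ie)
  have gen: "(e * x + g * y) * (e * x' + g * y') = e * (x * x') + g * (y * y')" for x y x' y'
  proof -
    have "(e * x + g * y) * (e * x' + g * y') = (e*x)*(e*x') + (e*x)*(g*y') + (g*y)*(e*x') + (g*y)*(g*y')"
      by (simp add: distrib_left distrib_right add.assoc)
    also have "(e*x)*(e*x') = e * (x * x')" by (metis c ie mult.assoc)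
    also have "(e*x)*(g*y') = 0" by (metis c eg(1) mult.assoc mult_zero_left mult_zero_right)
    also have "(g*y)*(e*x') = 0" by (metis cg eg(2) mult.assoc mult_zero_left mult_zero_right)
    also have "(g*y)*(g*y') = g * (y * y')" by (metis cg ig mult.assoc)
    finally show ?thesis by simp
  qed
  have "(e * a + (1 - e) * b) * (e * a' + (1 - e) * b') = 1"
    using gen[of a b a' b'] by (simp add: a b g_def[symmetric]) (simp add: g_def)
  moreover have "(e * a' + (1 - e) * b') * (e * a + (1 - e) * b) = 1"
    using gen[of a' b' a b] by (simp add: a b g_def[symmetric]) (simp add: g_def)
  ultimately show ?thesis by (rule unitsI)
qed



lemma uc_exists:
  assumes "uniquely_clean TYPE('a::ring_1)"
  shows "\<exists>e u. idempotent e \<and> u \<in> units \<and> (r::'a) = e + u"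
  using assms unfolding uniquely_clean_def by (metis fst_conv snd_conv)

lemma uc_unique:
  assumes "uniquely_clean TYPE('a::ring_1)" "idempotent e" "idempotent f" "u \<in> units" "v \<in> units"
    "(e::'a) + u = f + v"
  shows "e = f"
proof -
  have "\<exists>!p. idempotent (fst p) \<and> snd p \<in> units \<and> e + u = fst p + snd p"
    using assms(1) unfolding uniquely_clean_def by blast
  then have "(e, u) = (f, v)" using assms(2-6) by (metis fst_conv snd_conv)
  then show ?thesis by simp
qed

lemma idem_0: "idempotent (0::'a::ring_1)" by (simp add: idempotent_def)

lemma idem_compl: "idempotent (e::'a::ring_1) \<Longrightarrow> idempotent (1 - e)"
  by (simp add: idempotent_def algebra_simps)

lemma uc_corner:
  assumes uc: "uniquely_clean TYPE('a::ring_1)" and ie: "idempotent (e::'a)"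
  shows "e * x * (1 - e) = 0"
proof -
  define g where "g = 1 - e"
  have ee: "e * e = e" using ie by (simp add: idempotent_def)
  have eg: "g * e = 0" "e * g = 0" by (simp_all add: g_def algebra_simps ee)
  define n where "n = e * (x * g)"
  have en: "e * n = n" by (simp add: n_def mult.assoc[symmetric] ee)
  have ne: "n * e = 0" by (simp add: n_def mult.assoc eg)
  have nn: "n * n = 0" by (metis ne n_def mult.assoc mult_zero_left)
  have fi: "idempotent (e + n)" unfolding idempotent_def
    by (simp add: distrib_left distrib_right ee en ne nn)
  have un: "1 - n \<in> units"
    by (rule unitsI[of _ "1 + n"]) (simp_all add: algebra_simps nn)
  have "e + 1 = (e + n) + (1 - n)" by simp
  then have "e = e + n" using uc_unique[OF uc ie fi units_one un] by blast
  then show ?thesis by (simp add: n_def g_def mult.assoc)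
qed

lemma uc_central:
  assumes uc: "uniquely_clean TYPE('a::ring_1)" and ie: "idempotent (e::'a)"
  shows "e * x = x * e"
proof -
  have a: "e * x * (1 - e) = 0" by (rule uc_corner[OF uc ie])
  have b: "(1 - e) * x * (1 - (1 - e)) = 0" by (rule uc_corner[OF uc idem_compl[OF ie]])
  have ee: "e * (x * (e * e)) = e * (x * e)" using ie by (simp add: idempotent_def)
  from a have "e * x = e * x * e" by (simp add: algebra_simps ee)
  moreover from b have "x * e = e * x * e" using ie by (simp add: algebra_simps idempotent_def)
  ultimately show ?thesis by simp
qed


lemma uc_L:
  assumes uc: "uniquely_clean TYPE('a::ring_1)" and ie: "idempotent (e::'a)" and xu: "x \<in> units"
  shows "x - e - e \<in> units"
proof -
  obtain f v where fi: "idempotent f" and vu: "v \<in> units" and xe: "x - e = f + v"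
    using uc_exists[OF uc] by blast
  have ce: "\<And>y. e * y = y * e" by (rule uc_central[OF uc ie])
  have cf: "\<And>y. f * y = y * f" by (rule uc_central[OF uc fi])
  have ee: "e * e = e" and ff: "f * f = f" using ie fi by (simp_all add: idempotent_def)
  define g where "g = e - e * f"
  have fe: "f * e = e * f" by (rule cf)
  have efe: "e * f * e = e * f"
  proof -
    have "e * f * e = e * (f * e)" by (simp add: mult.assoc)
    also have "\<dots> = (e * e) * f" by (simp add: fe mult.assoc)
    finally show ?thesis by (simp add: ee)
  qed
  have efef: "(e * f) * (e * f) = e * f"
  proof -
    have "(e*f)*(e*f) = e*((f*e)*f)" by (simp add: mult.assoc)
    also have "\<dots> = (e*e)*(f*f)" by (simp add: fe mult.assoc)
    finally show ?thesis by (simp add: ee ff)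
  qed
  have eef: "e * (e * f) = e * f" by (metis ee mult.assoc)
  have gg: "g * g = g" unfolding g_def
    by (simp add: algebra_simps ee efe efef eef del: mult.assoc)
  have gi: "idempotent g" using gg by (simp add: idempotent_def)
  have cg: "g * y = y * g" for y
  proof -
    have "y * (e * f) = (y * e) * f" by (simp add: mult.assoc)
    also have "\<dots> = e * (y * f)" by (simp add: ce[of y, symmetric] mult.assoc)
    also have "\<dots> = e * (f * y)" by (simp add: cf[of y])
    finally have "y * (e * f) = e * (f * y)" .
    then show ?thesis unfolding g_def by (simp add: left_diff_distrib right_diff_distrib ce[of y] mult.assoc)
  qed
  have gf: "g * f = 0" unfolding g_def by (simp add: algebra_simps ff)
  have ge: "g * e = g" unfolding g_def by (simp add: algebra_simps efe ee del: mult.assoc)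
  have yu: "g * x + (1 - g) * 1 \<in> units" by (rule combo[OF cg gg xu units_one])
  have "g * (x - e) = g * v" using xe gf by (simp add: distrib_left)
  then have gxv: "g * x - g = g * v" using ge by (simp add: right_diff_distrib)
  have y2: "g * x + (1 - g) * 1 - g = g * v + (1 - g) * 1" using gxv by (simp add: algebra_simps)
  have y2u: "g * x + (1 - g) * 1 - g \<in> units" unfolding y2 by (rule combo[OF cg gg vu units_one])
  have "0 + (g * x + (1 - g) * 1) = g + (g * x + (1 - g) * 1 - g)" by simp
  then have "0 = g" using uc_unique[OF uc idem_0 gi yu y2u] by blast
  then have eef2: "e * f = e" unfolding g_def by simp
  have "e * (x - e) = e + e * v" using xe eef2 by (simp add: distrib_left)
  then have exv: "e * x - e - e = e * v" using ee by (simp add: right_diff_distrib algebra_simps)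
  have "x - e - e = e * v + (1 - e) * x"
  proof -
    have "x = e * x + (1 - e) * x" by (simp add: algebra_simps)
    then have "x - e - e = (e * x - e - e) + (1 - e) * x" by (simp add: algebra_simps)
    then show ?thesis using exv by simp
  qed
  then show ?thesis using combo[OF ce ee vu xu] by simp
qed

lemma uc_M:
  assumes uc: "uniquely_clean TYPE('a::ring_1)" and ie: "idempotent (e::'a)"
    and su: "s \<in> units" and seu: "s + e \<in> units"
  shows "e = 0"
proof -
  have "s + e - e - e \<in> units" by (rule uc_L[OF uc ie seu])
  then have u2: "s - e \<in> units" by simp
  have "0 + s = e + (s - e)" by simp
  then show ?thesis using uc_unique[OF uc idem_0 ie su u2] by simp
qed


lemma idem_1: "idempotent (1::'a::ring_1)" by (simp add: idempotent_def)

lemma uc_plus2: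
  assumes uc: "uniquely_clean TYPE('a::ring_1)" and tu: "(t::'a) \<in> units"
  shows "t + 1 + 1 \<in> units"
proof -
  have "- t - 1 - 1 \<in> units" by (rule uc_L[OF uc idem_1 units_uminus[OF tu]])
  then have "- (- t - 1 - 1) \<in> units" by (rule units_uminus)
  moreover have "- (- t - 1 - 1) = t + 1 + 1" by (simp add: algebra_simps)
  ultimately show ?thesis by (simp only:)
qed

lemma uc_N:
  assumes uc: "uniquely_clean TYPE('a::ring_1)" and vu: "(v::'a) \<in> units" and wu: "w \<in> units"
  shows "v + w - 1 \<in> units"
proof -
  obtain e t where ie: "idempotent e" and tu: "t \<in> units" and z: "v + w - 1 = e + t"
    using uc_exists[OF uc] by blast
  have ce: "\<And>y. e * y = y * e" by (rule uc_central[OF uc ie])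
  have ee: "e * e = e" using ie by (simp add: idempotent_def)
  have "e * (v + w - 1) = e * (e + t)" using z by simp
  then have evw: "e * v + e * w = e * (t + 1 + 1)" using ee by (simp add: algebra_simps)
  have "v + e * w = e * (t + 1 + 1) + (1 - e) * v"
    using evw by (simp add: algebra_simps)
  then have u1: "v + e * w \<in> units" using combo[OF ce ee uc_plus2[OF uc tu] vu] by simp
  obtain w' where w1: "w * w' = 1" and w2: "w' * w = 1" using wu by (rule unitsE)
  have w'u: "w' \<in> units" using w1 w2 by (intro unitsI[of _ w]) 
  have "w' * (e * w) = (w' * e) * w" by (simp add: mult.assoc)
  also have "\<dots> = e * (w' * w)" by (simp add: ce[of w', symmetric] mult.assoc)
  finally have "w' * (e * w) = e" using w2 by simp
  then have "w' * (v + e * w) = w' * v + e" by (simp add: distrib_left)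
  then have su: "w' * v + e \<in> units" using units_mult[OF w'u u1] by simp
  have "e = 0" by (rule uc_M[OF uc ie units_mult[OF w'u vu] su])
  then show ?thesis using z tu by simp
qed

lemma uc_DI:
  assumes uc: "uniquely_clean TYPE('a::ring_1)"
  shows "DI_ring TYPE('a)"
  unfolding DI_ring_def
proof
  fix r :: 'a
  obtain e v where ie: "idempotent e" and vu: "v \<in> units" and z: "r - 1 = e + v"
    using uc_exists[OF uc] by blast
  have "1 + v \<in> Delta" unfolding Delta_def
  proof
    show "\<forall>u\<in>units. 1 + v + u \<in> units"
    proof
      fix u :: 'a assume uu: "u \<in> units"
      have "v + u - 1 \<in> units" by (rule uc_N[OF uc vu uu])
      then have "- (v + u - 1) - 1 - 1 \<in> units" by (intro uc_L[OF uc idem_1] units_uminus)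
      then have "- (- (v + u - 1) - 1 - 1) \<in> units" by (rule units_uminus)
      then show "1 + v + u \<in> units" by (simp add: algebra_simps)
    qed
  qed
  moreover have "r = e + (1 + v)" using z by (simp add: algebra_simps)
  ultimately show "\<exists>e b. idempotent e \<and> b \<in> Delta \<and> r = e + b" using ie by blast
qed

lemma delta_neg: "(b::'a::ring_1) \<in> Delta \<Longrightarrow> - b \<in> Delta"
  unfolding Delta_def
proof (safe)
  fix u :: 'a assume h: "\<forall>u\<in>units. b + u \<in> units" and uu: "u \<in> units"
  have "b + - u \<in> units" using h units_uminus[OF uu] by blast
  then have "- (b + - u) \<in> units" by (rule units_uminus)
  then show "- b + u \<in> units" by simp
qed

lemma delta_add: "(a::'a::ring_1) \<in> Delta \<Longrightarrow> b \<in> Delta \<Longrightarrow> a + b \<in> Delta"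
  unfolding Delta_def
proof (safe)
  fix u :: 'a assume ha: "\<forall>u\<in>units. a + u \<in> units" and hb: "\<forall>u\<in>units. b + u \<in> units" and uu: "u \<in> units"
  have "b + u \<in> units" using hb uu by blast
  then have "a + (b + u) \<in> units" using ha by blast
  then show "a + b + u \<in> units" by (simp add: add.assoc)
qed

lemma delta_unit: "(b::'a::ring_1) \<in> Delta \<Longrightarrow> 1 + b \<in> units"
proof -
  assume "b \<in> Delta"
  then have "b + 1 \<in> units" unfolding Delta_def using units_one by blast
  then show "1 + b \<in> units" by (simp add: add.commute)
qed

lemma DI_units:
  assumes di: "DI_ring TYPE('a::ring_1)" and uu: "(u::'a) \<in> units"
  shows "u - 1 \<in> Delta"
proof -
  obtain e b where ie: "idempotent e" and bd: "b \<in> Delta" and z: "u = e + b"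
    using di unfolding DI_ring_def by blast
  have "- b + u \<in> units" using delta_neg[OF bd] uu unfolding Delta_def by blast
  then have "e \<in> units" using z by (simp add: algebra_simps)
  then have "e = 1" by (rule idem_unit[OF ie])
  then show ?thesis using z bd by simp
qed

lemma DI_UC:
  assumes di: "DI_ring TYPE('a::ring_1)" and ic: "idempotents_central TYPE('a)"
  shows "uniquely_clean TYPE('a)"
  unfolding uniquely_clean_def
proof
  fix r :: 'a
  obtain e b where ie: "idempotent e" and bd: "b \<in> Delta" and z: "r - 1 = e + b"
    using di unfolding DI_ring_def by blast
  have ex: "idempotent (fst (e, 1 + b)) \<and> snd (e, 1 + b) \<in> units \<and> r = fst (e, 1 + b) + snd (e, 1 + b)"
    using ie delta_unit[OF bd] z by (simp add: algebra_simps)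
  have uq: "e1 = e2" if i1: "idempotent e1" and i2: "idempotent e2" and u1: "u1 \<in> units"
    and u2: "u2 \<in> units" and eq: "e1 + u1 = e2 + u2" for e1 e2 u1 u2 :: 'a
  proof -
    define d where "d = e1 - e2"
    have "d = (u2 - 1) + - (u1 - 1)" using eq unfolding d_def by (simp add: algebra_simps)
    then have dd: "d \<in> Delta" using DI_units[OF di u1] DI_units[OF di u2]
      by (metis delta_add delta_neg)
    define p where "p = e1 * e2"
    have t1: "e1 * e1 = e1" "e2 * e2 = e2" using i1 i2 by (simp_all add: idempotent_def)
    have t2: "e2 * e1 = p" using ic i1 unfolding idempotents_central_def p_def by metis
    have t3: "e1 * p = p" "p * e1 = p" "e2 * p = p" "p * e2 = p" "p * p = p"
      unfolding p_def using t1 t2[unfolded p_def] by (metis mult.assoc)+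
    define h where "h = e1 + e2 - p - p"
    have hdef: "d * d = h" unfolding d_def h_def by (simp add: algebra_simps t1 t2 p_def[symmetric])
    have hd: "h * d = d" "d * h = d" unfolding d_def h_def by (simp_all add: algebra_simps t1 t2 t3 p_def[symmetric])
    have hh: "h * h = h" unfolding h_def by (simp add: algebra_simps t1 t2 t3 p_def[symmetric])
    define w where "w = 1 - h - d"
    have ww: "w * w = 1" unfolding w_def by (simp add: algebra_simps hdef hd hh)
    have wu: "w \<in> units" using ww by (intro unitsI[of _ w])
    have "d + w \<in> units" using dd wu unfolding Delta_def by blast
    then have "1 - h \<in> units" unfolding w_def by simp
    moreover have "idempotent (1 - h)" using hh by (simp add: idempotent_def algebra_simps)
    ultimately have "1 - h = 1" using idem_unit by blast
    then have h0: "h = 0" by simp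
    have "e1 * h = e1 - p" unfolding h_def by (simp add: algebra_simps t1 t2 t3 p_def[symmetric])
    moreover have "e2 * h = e2 - p" unfolding h_def by (simp add: algebra_simps t1 t2 t3 p_def[symmetric])
    ultimately show ?thesis using h0 by simp
  qed
  show "\<exists>!p. idempotent (fst p) \<and> snd p \<in> units \<and> r = fst p + snd p"
  proof (rule ex1I[where a="(e, 1 + b)"])
    show "idempotent (fst (e, 1 + b)) \<and> snd (e, 1 + b) \<in> units \<and> r = fst (e, 1 + b) + snd (e, 1 + b)"
      by (rule ex)
  next
    fix q :: "'a \<times> 'a" assume q: "idempotent (fst q) \<and> snd q \<in> units \<and> r = fst q + snd q"
    have "fst q = e" using uq[of "fst q" e "snd q" "1 + b"] q ex by simp
    moreover have "snd q = 1 + b" using q ex calculation by (simp add: algebra_simps)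
    ultimately show "q = (e, 1 + b)" by (simp add: prod_eq_iff)
  qed
qed

theorem corollary4p7:
  shows "uniquely_clean TYPE('a::ring_1) \<longleftrightarrow>
         (DI_ring TYPE('a) \<and> idempotents_central TYPE('a))"
proof
  assume uc: "uniquely_clean TYPE('a)"
  show "DI_ring TYPE('a) \<and> idempotents_central TYPE('a)"
    using uc_DI[OF uc] uc_central[OF uc] unfolding idempotents_central_def by blast
next
  assume "DI_ring TYPE('a) \<and> idempotents_central TYPE('a)"
  then show "uniquely_clean TYPE('a)" using DI_UC by blast
qed

end
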